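(* Let $\mathcal{G}=(\mathcal{V},\mathcal{E})$ be a connected time-invariant undirected graph on $\mathcal{V}=\{1,\dots,n\}$ with fixed weights $w_{ij}$ satisfying the standing weight conventions. Suppose each agent $i$ has initial state $\mu_i(0)\in\mathfrak{U}_2(\mathbb{R})$ and updates by $\mu_i(t+1)=\operatorname{argmin}_{\eta\in\mathfrak{U}_2(\mathbb{R})}\sum_{j\in\mathcal{N}_i}w_{ij}\ell_2(\eta,\mu_j(t))^2$. Then there exists $\mu^\ast\in\mathfrak{U}_2(\mathbb{R})$ such that for every $i\in\mathcal{V}$, $\ell_2(\mu_i(t),\mu^\ast)\to0$ at an exponential rate as $t\to\infty$.
   Context: $\mathfrak{U}_2(\mathbb{R})$ is the set of Borel probability measures on $\mathbb{R}$ with finite second moment; $\ell_2$ is the 2-Wasserstein distance $\ell_2(\mu,\nu)=\big(\inf_{\gamma\in\Gamma(\mu,\nu)}\int|x-y|^2d\gamma\big)^{1/2}$ over couplings. $\mathcal{N}_i=\{j:(i,j)\in\mathcal{E}\}$ contains $i$; $w_{ij}>0$ iff $j\in\mathcal{N}_i$, $w_{ij}=0$ otherwise, $\sum_jw_{ij}=1$, $w_{ii}>0$. Exponential rate means there exist $C>0$, $\rho\in(0,1)$ with $\ell_2(\mu_i(t),\mu^\ast)\le C\rho^t$ for all $t$. *)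

theory Defs
  imports "HOL-Probability.Probability"
begin

definition P2 :: "real measure set" where
  "P2 = {\<mu>. prob_space \<mu> \<and> sets \<mu> = sets (borel :: real measure) \<and>
              integrable \<mu> (\<lambda>x. x ^ 2)}"

definition couplings :: "real measure \<Rightarrow> real measure \<Rightarrow> (real \<times> real) measure set" where
  "couplings \<mu> \<nu> = {\<gamma>. prob_space \<gamma> \<and> sets \<gamma> = sets (borel \<Otimes>\<^sub>M borel) \<and>
                       distr \<gamma> borel fst = \<mu> \<and> distr \<gamma> borel snd = \<nu>}"

definition W2sq :: "real measure \<Rightarrow> real measure \<Rightarrow> ennreal" where
  "W2sq \<mu> \<nu> = (INF \<gamma>\<in>couplings \<mu> \<nu>. \<integral>\<^sup>+ z. ennreal ((fst z - snd z) ^ 2) \<partial>\<gamma>)"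

definition wass2 :: "real measure \<Rightarrow> real measure \<Rightarrow> real" where
  "wass2 \<mu> \<nu> = sqrt (enn2real (W2sq \<mu> \<nu>))"

end

theory Submission
  imports Defs
begin

definition hh :: "real \<Rightarrow> real \<Rightarrow> real \<Rightarrow> real \<Rightarrow> ennreal" where
  "hh x y s t = (if s < t \<and> x \<le> s \<and> t < y then 2 else 0) + (if s < t \<and> y \<le> s \<and> t < x then 2 else 0)"

lemma hh_meas[measurable]:
  assumes [measurable]: "X \<in> borel_measurable M" "Y \<in> borel_measurable M"
    "S \<in> borel_measurable M" "T \<in> borel_measurable M"
  shows "(\<lambda>z. hh (X z) (Y z) (S z) (T z)) \<in> borel_measurable M"
  unfolding hh_def by measurable

lemma tri_int:
  fixes x y :: real assumes "x \<le> y"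
  shows "(\<integral>\<^sup>+s. \<integral>\<^sup>+t. (if s < t \<and> x \<le> s \<and> t < y then 2 else 0) \<partial>lborel \<partial>lborel) = ennreal ((y - x)^2)"
proof -
  have inner: "(\<integral>\<^sup>+t. (if s < t \<and> x \<le> s \<and> t < y then 2 else 0) \<partial>lborel)
      = ennreal (2 * (y - s)) * indicator {x..y} s" for s
  proof (cases "x \<le> s \<and> s \<le> y")
    case True
    have "(\<integral>\<^sup>+t. (if s < t \<and> x \<le> s \<and> t < y then 2 else 0) \<partial>lborel)
        = (\<integral>\<^sup>+t. 2 * indicator {s<..<y} t \<partial>lborel)"
      using True by (intro nn_integral_cong) (auto simp: indicator_def)
    also have "\<dots> = 2 * ennreal (y - s)"
      using True by (subst nn_integral_cmult_indicator) auto
    also have "\<dots> = ennreal (2 * (y - s))"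
      using ennreal_mult'[of 2 "y - s"] by simp
    finally show ?thesis using True by simp
  next
    case False
    then have "(\<lambda>t. (if s < t \<and> x \<le> s \<and> t < y then 2 else 0::ennreal)) = (\<lambda>t. 0)"
      by (auto simp: fun_eq_iff)
    then show ?thesis using False by (auto simp: indicator_def)
  qed
  have "(\<integral>\<^sup>+s. ennreal (2 * (y - s)) * indicator {x..y} s \<partial>lborel)
      = (\<lambda>s. - ((y - s)^2)) y - (\<lambda>s. - ((y - s)^2)) x"
    by (rule nn_integral_FTC_Icc) (auto intro!: derivative_eq_intros simp: assms)
  then show ?thesis by (simp add: inner)
qed

lemma hh_int:
  fixes x y :: real
  shows "(\<integral>\<^sup>+s. \<integral>\<^sup>+t. hh x y s t \<partial>lborel \<partial>lborel) = ennreal ((x - y)^2)"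
proof (cases "x \<le> y")
  case True
  have "hh x y s t = (if s < t \<and> x \<le> s \<and> t < y then 2 else 0)" for s t
    using True by (auto simp: hh_def)
  then show ?thesis using tri_int[OF True] by (simp add: power2_commute)
next
  case False
  have "hh x y s t = (if s < t \<and> y \<le> s \<and> t < x then 2 else 0)" for s t
    using False by (auto simp: hh_def)
  then show ?thesis using tri_int[of y x] False by simp
qed

lemma hoeff:
  assumes sf: "sigma_finite_measure M"
    and [measurable]: "X \<in> borel_measurable M" "Y \<in> borel_measurable M"
  shows "(\<integral>\<^sup>+\<omega>. ennreal ((X \<omega> - Y \<omega>)^2) \<partial>M)
       = (\<integral>\<^sup>+s. \<integral>\<^sup>+t. \<integral>\<^sup>+\<omega>. hh (X \<omega>) (Y \<omega>) s t \<partial>M \<partial>lborel \<partial>lborel)"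
proof -
  interpret pair_sigma_finite M lborel
    using sf by (simp add: pair_sigma_finite_def lborel.sigma_finite_measure_axioms)
  have m1: "(\<lambda>(\<omega>, s). \<integral>\<^sup>+t. hh (X \<omega>) (Y \<omega>) s t \<partial>lborel) \<in> borel_measurable (M \<Otimes>\<^sub>M lborel)"
    by measurable
  have "(\<integral>\<^sup>+\<omega>. ennreal ((X \<omega> - Y \<omega>)^2) \<partial>M)
      = (\<integral>\<^sup>+\<omega>. \<integral>\<^sup>+s. \<integral>\<^sup>+t. hh (X \<omega>) (Y \<omega>) s t \<partial>lborel \<partial>lborel \<partial>M)"
    by (simp add: hh_int)
  also have "\<dots> = (\<integral>\<^sup>+s. \<integral>\<^sup>+\<omega>. \<integral>\<^sup>+t. hh (X \<omega>) (Y \<omega>) s t \<partial>lborel \<partial>M \<partial>lborel)"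
    by (rule Fubini'[symmetric]) (use m1 in simp)
  also have "\<dots> = (\<integral>\<^sup>+s. \<integral>\<^sup>+t. \<integral>\<^sup>+\<omega>. hh (X \<omega>) (Y \<omega>) s t \<partial>M \<partial>lborel \<partial>lborel)"
  proof (rule nn_integral_cong)
    fix s :: real
    have m2: "(\<lambda>(\<omega>, t). hh (X \<omega>) (Y \<omega>) s t) \<in> borel_measurable (M \<Otimes>\<^sub>M lborel)"
      by measurable
    show "(\<integral>\<^sup>+\<omega>. \<integral>\<^sup>+t. hh (X \<omega>) (Y \<omega>) s t \<partial>lborel \<partial>M) = (\<integral>\<^sup>+t. \<integral>\<^sup>+\<omega>. hh (X \<omega>) (Y \<omega>) s t \<partial>M \<partial>lborel)"
      by (rule Fubini'[symmetric]) (use m2 in simp)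
  qed
  finally show ?thesis .
qed

definition Om :: "real measure" where "Om = restrict_space lborel {0<..<1::real}"
definition Q :: "real measure \<Rightarrow> real \<Rightarrow> real" where "Q \<mu> u = Inf {x. u \<le> cdf \<mu> x}"

lemma space_Om[simp]: "space Om = {0<..<1}"
  by (simp add: Om_def)

lemma prob_Om: "prob_space Om"
  unfolding Om_def
  by (auto simp add: emeasure_restrict_space space_restrict_space intro!: prob_spaceI)

lemma sets_Om: "sets Om = sets (restrict_space borel {0<..<1::real})"
  unfolding Om_def by (simp add: sets_restrict_space)

lemma P2_rd: "\<mu> \<in> P2 \<Longrightarrow> real_distribution \<mu>"
  unfolding P2_def real_distribution_def real_distribution_axioms_def by auto

lemma Q_meas[measurable]: "\<mu> \<in> P2 \<Longrightarrow> Q \<mu> \<in> borel_measurable Om"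
proof -
  assume "\<mu> \<in> P2"
  then interpret cdf_distribution \<mu> unfolding cdf_distribution_def using P2_rd by auto
  have "(\<lambda>u. Q \<mu> u) \<in> borel_measurable (restrict_space borel {0<..<1})"
    unfolding Q_def by (rule measurable_CI)
  then show ?thesis using sets_Om measurable_cong_sets by metis
qed

lemma Q_distr: "\<mu> \<in> P2 \<Longrightarrow> distr Om borel (Q \<mu>) = \<mu>"
proof -
  assume "\<mu> \<in> P2"
  then interpret cdf_distribution \<mu> unfolding cdf_distribution_def using P2_rd by auto
  show ?thesis unfolding Om_def Q_def[abs_def] by (rule distr_I_eq_M)
qed

lemma Q_le: "\<mu> \<in> P2 \<Longrightarrow> 0 < u \<Longrightarrow> u < 1 \<Longrightarrow> Q \<mu> u \<le> x \<longleftrightarrow> u \<le> cdf \<mu> x"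
proof -
  assume "\<mu> \<in> P2" "0 < u" "u < 1"
  then interpret cdf_distribution \<mu> unfolding cdf_distribution_def using P2_rd by auto
  show ?thesis unfolding Q_def using \<open>0 < u\<close> \<open>u < 1\<close> by (intro pseudoinverse[symmetric])
qed

lemma hh_nn:
  assumes [measurable]: "X \<in> borel_measurable M" "Y \<in> borel_measurable M"
  shows "(\<integral>\<^sup>+\<omega>. hh (X \<omega>) (Y \<omega>) s t \<partial>M)
     = (if s < t then 2 else 0) * emeasure M {\<omega>\<in>space M. X \<omega> \<le> s \<and> t < Y \<omega>}
     + (if s < t then 2 else 0) * emeasure M {\<omega>\<in>space M. Y \<omega> \<le> s \<and> t < X \<omega>}"
proof -
  let ?c = "(if s < t then 2 else 0) :: ennreal"
  have "(\<integral>\<^sup>+\<omega>. hh (X \<omega>) (Y \<omega>) s t \<partial>M)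
      = (\<integral>\<^sup>+\<omega>. ?c * indicator {\<omega>\<in>space M. X \<omega> \<le> s \<and> t < Y \<omega>} \<omega>
              + ?c * indicator {\<omega>\<in>space M. Y \<omega> \<le> s \<and> t < X \<omega>} \<omega> \<partial>M)"
    by (intro nn_integral_cong) (auto simp: hh_def indicator_def)
  also have "\<dots> = ?c * emeasure M {\<omega>\<in>space M. X \<omega> \<le> s \<and> t < Y \<omega>}
     + ?c * emeasure M {\<omega>\<in>space M. Y \<omega> \<le> s \<and> t < X \<omega>}"
  proof -
    have s1[measurable]: "{\<omega>\<in>space M. X \<omega> \<le> s \<and> t < Y \<omega>} \<in> sets M" by measurable
    have s2[measurable]: "{\<omega>\<in>space M. Y \<omega> \<le> s \<and> t < X \<omega>} \<in> sets M" by measurable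
    have "(\<integral>\<^sup>+\<omega>. ?c * indicator {\<omega>\<in>space M. X \<omega> \<le> s \<and> t < Y \<omega>} \<omega>
              + ?c * indicator {\<omega>\<in>space M. Y \<omega> \<le> s \<and> t < X \<omega>} \<omega> \<partial>M)
       = (\<integral>\<^sup>+\<omega>. ?c * indicator {\<omega>\<in>space M. X \<omega> \<le> s \<and> t < Y \<omega>} \<omega> \<partial>M)
         + (\<integral>\<^sup>+\<omega>. ?c * indicator {\<omega>\<in>space M. Y \<omega> \<le> s \<and> t < X \<omega>} \<omega> \<partial>M)"
      by (rule nn_integral_add) measurable
    also have "\<dots> = ?c * emeasure M {\<omega>\<in>space M. X \<omega> \<le> s \<and> t < Y \<omega>}
     + ?c * emeasure M {\<omega>\<in>space M. Y \<omega> \<le> s \<and> t < X \<omega>}"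
      by (simp only: nn_integral_cmult_indicator[OF s1] nn_integral_cmult_indicator[OF s2])
    finally show ?thesis .
  qed
  finally show ?thesis .
qed

lemma cdf_distr_marg:
  assumes [measurable]: "X \<in> borel_measurable M" and "distr M borel X = \<mu>"
  shows "cdf \<mu> s = measure M {\<omega>\<in>space M. X \<omega> \<le> s}"
proof -
  have "cdf \<mu> s = measure (distr M borel X) {..s}" using assms by (simp add: cdf_def)
  also have "\<dots> = measure M (X -` {..s} \<inter> space M)" by (rule measure_distr) auto
  finally show ?thesis by (simp add: vimage_def Int_def conj_commute)
qed

lemma lower_joint:
  assumes "prob_space M" and [measurable]: "X \<in> borel_measurable M" "Y \<in> borel_measurable M"
    and "distr M borel X = \<mu>" "distr M borel Y = \<nu>"
  shows "ennreal (cdf \<mu> s - cdf \<nu> t) \<le> emeasure M {\<omega>\<in>space M. X \<omega> \<le> s \<and> t < Y \<omega>}"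
proof -
  interpret prob_space M by fact
  have "measure M {\<omega>\<in>space M. X \<omega> \<le> s}
     \<le> measure M ({\<omega>\<in>space M. X \<omega> \<le> s \<and> t < Y \<omega>} \<union> {\<omega>\<in>space M. Y \<omega> \<le> t})"
    by (intro finite_measure_mono) auto
  also have "\<dots> \<le> measure M {\<omega>\<in>space M. X \<omega> \<le> s \<and> t < Y \<omega>} + measure M {\<omega>\<in>space M. Y \<omega> \<le> t}"
    by (intro measure_Un_le) auto
  finally have "cdf \<mu> s - cdf \<nu> t \<le> measure M {\<omega>\<in>space M. X \<omega> \<le> s \<and> t < Y \<omega>}"
    using cdf_distr_marg[of X M \<mu> s] cdf_distr_marg[of Y M \<nu> t] assms by simp
  then show ?thesis by (simp add: emeasure_eq_measure ennreal_leI)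
qed

lemma upper_Q:
  assumes "\<mu> \<in> P2" "\<nu> \<in> P2"
  shows "emeasure Om {u\<in>space Om. Q \<mu> u \<le> s \<and> t < Q \<nu> u} \<le> ennreal (cdf \<mu> s - cdf \<nu> t)"
proof -
  have eq: "{u\<in>space Om. Q \<mu> u \<le> s \<and> t < Q \<nu> u} = {0<..<1} \<inter> {cdf \<nu> t<..cdf \<mu> s}"
  proof (intro set_eqI iffI)
    fix u assume "u \<in> {u\<in>space Om. Q \<mu> u \<le> s \<and> t < Q \<nu> u}"
    then show "u \<in> {0<..<1} \<inter> {cdf \<nu> t<..cdf \<mu> s}"
      using Q_le[OF assms(1), of u s] Q_le[OF assms(2), of u t] by auto
  next
    fix u assume "u \<in> {0<..<1} \<inter> {cdf \<nu> t<..cdf \<mu> s}"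
    then show "u \<in> {u\<in>space Om. Q \<mu> u \<le> s \<and> t < Q \<nu> u}"
      using Q_le[OF assms(1), of u s] Q_le[OF assms(2), of u t] by auto
  qed
  have "emeasure Om {u\<in>space Om. Q \<mu> u \<le> s \<and> t < Q \<nu> u} = emeasure Om ({0<..<1} \<inter> {cdf \<nu> t<..cdf \<mu> s})"
    by (rule arg_cong[OF eq])
  also have "\<dots> = emeasure lborel ({0<..<1} \<inter> {cdf \<nu> t<..cdf \<mu> s})"
    unfolding Om_def by (rule emeasure_restrict_space) auto
  also have "\<dots> \<le> emeasure lborel {cdf \<nu> t<..cdf \<mu> s}"
    by (rule emeasure_mono) auto
  also have "\<dots> \<le> ennreal (cdf \<mu> s - cdf \<nu> t)"
  proof (cases "cdf \<nu> t \<le> cdf \<mu> s")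
    case True then show ?thesis by simp
  next
    case False then have "{cdf \<nu> t<..cdf \<mu> s} = {}" by auto
    then show ?thesis by simp
  qed
  finally show ?thesis .
qed

lemma W2_lower_nn:
  assumes "\<mu> \<in> P2" "\<nu> \<in> P2" "\<gamma> \<in> couplings \<mu> \<nu>"
  shows "(\<integral>\<^sup>+u. ennreal ((Q \<mu> u - Q \<nu> u)^2) \<partial>Om) \<le> (\<integral>\<^sup>+z. ennreal ((fst z - snd z)^2) \<partial>\<gamma>)"
proof -
  from assms(3) have g: "prob_space \<gamma>" "sets \<gamma> = sets (borel \<Otimes>\<^sub>M borel)"
    "distr \<gamma> borel fst = \<mu>" "distr \<gamma> borel snd = \<nu>" by (auto simp: couplings_def)
  have mg[measurable]: "fst \<in> borel_measurable \<gamma>" "snd \<in> borel_measurable \<gamma>"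
    using g(2) by (auto simp: measurable_cong_sets[OF g(2) refl])
  have mO[measurable]: "Q \<mu> \<in> borel_measurable Om" "Q \<nu> \<in> borel_measurable Om"
    using assms by auto
  have sfO: "sigma_finite_measure Om" using prob_Om
    by (simp add: prob_space_imp_sigma_finite)
  have sfg: "sigma_finite_measure \<gamma>" using g(1)
    by (simp add: prob_space_imp_sigma_finite)
  have key: "(\<integral>\<^sup>+u. hh (Q \<mu> u) (Q \<nu> u) s t \<partial>Om) \<le> (\<integral>\<^sup>+z. hh (fst z) (snd z) s t \<partial>\<gamma>)" for s t
  proof -
    have a: "emeasure Om {u \<in> space Om. Q \<mu> u \<le> s \<and> t < Q \<nu> u} \<le> emeasure \<gamma> {z \<in> space \<gamma>. fst z \<le> s \<and> t < snd z}"
      by (rule order.trans[OF upper_Q[OF assms(1,2)] lower_joint[OF g(1) mg(1) mg(2) g(3) g(4)]])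
    have b: "emeasure Om {u \<in> space Om. Q \<nu> u \<le> s \<and> t < Q \<mu> u} \<le> emeasure \<gamma> {z \<in> space \<gamma>. snd z \<le> s \<and> t < fst z}"
      by (rule order.trans[OF upper_Q[OF assms(2,1)] lower_joint[OF g(1) mg(2) mg(1) g(4) g(3)]])
    show ?thesis
      unfolding hh_nn[OF mO] hh_nn[OF mg]
      by (rule add_mono[OF mult_left_mono[OF a] mult_left_mono[OF b]]) simp_all
  qed
  have k2: "(\<integral>\<^sup>+t. \<integral>\<^sup>+u. hh (Q \<mu> u) (Q \<nu> u) s t \<partial>Om \<partial>lborel) \<le> (\<integral>\<^sup>+t. \<integral>\<^sup>+z. hh (fst z) (snd z) s t \<partial>\<gamma> \<partial>lborel)" for s
    by (rule nn_integral_mono) (rule key)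
  have k3: "(\<integral>\<^sup>+s. \<integral>\<^sup>+t. \<integral>\<^sup>+u. hh (Q \<mu> u) (Q \<nu> u) s t \<partial>Om \<partial>lborel \<partial>lborel) \<le> (\<integral>\<^sup>+s. \<integral>\<^sup>+t. \<integral>\<^sup>+z. hh (fst z) (snd z) s t \<partial>\<gamma> \<partial>lborel \<partial>lborel)"
    by (rule nn_integral_mono) (rule k2)
  have e1: "(\<integral>\<^sup>+u. ennreal ((Q \<mu> u - Q \<nu> u)^2) \<partial>Om) = (\<integral>\<^sup>+s. \<integral>\<^sup>+t. \<integral>\<^sup>+u. hh (Q \<mu> u) (Q \<nu> u) s t \<partial>Om \<partial>lborel \<partial>lborel)"
    by (rule hoeff[OF sfO mO])
  have e2: "(\<integral>\<^sup>+z. ennreal ((fst z - snd z)^2) \<partial>\<gamma>) = (\<integral>\<^sup>+s. \<integral>\<^sup>+t. \<integral>\<^sup>+z. hh (fst z) (snd z) s t \<partial>\<gamma> \<partial>lborel \<partial>lborel)"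
    by (rule hoeff[OF sfg mg])
  show ?thesis
    unfolding e1 e2 by (rule k3)
qed

lemma prob_Om_distr: "f \<in> measurable Om N \<Longrightarrow> prob_space (distr Om N f)"
  using prob_Om by (simp add: prob_space.prob_space_distr)

lemma W2_upper:
  assumes [measurable]: "f \<in> borel_measurable Om" "g \<in> borel_measurable Om"
    and d: "distr Om borel f = \<mu>" "distr Om borel g = \<nu>"
  shows "W2sq \<mu> \<nu> \<le> (\<integral>\<^sup>+u. ennreal ((f u - g u)^2) \<partial>Om)"
proof -
  define \<gamma> where "\<gamma> = distr Om (borel \<Otimes>\<^sub>M borel) (\<lambda>u. (f u, g u))"
  have mp[measurable]: "(\<lambda>u. (f u, g u)) \<in> measurable Om (borel \<Otimes>\<^sub>M borel)" by measurable
  have "\<gamma> \<in> couplings \<mu> \<nu>"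
    unfolding couplings_def
  proof (intro CollectI conjI)
    show "prob_space \<gamma>" unfolding \<gamma>_def by (rule prob_Om_distr[OF mp])
    show "sets \<gamma> = sets (borel \<Otimes>\<^sub>M borel)" unfolding \<gamma>_def by simp
    show "distr \<gamma> borel fst = \<mu>" unfolding \<gamma>_def using d
      by (subst distr_distr) (auto simp: comp_def)
    show "distr \<gamma> borel snd = \<nu>" unfolding \<gamma>_def using d
      by (subst distr_distr) (auto simp: comp_def)
  qed
  then have "W2sq \<mu> \<nu> \<le> (\<integral>\<^sup>+z. ennreal ((fst z - snd z)^2) \<partial>\<gamma>)"
    unfolding W2sq_def by (rule INF_lower)
  also have "\<dots> = (\<integral>\<^sup>+u. ennreal ((f u - g u)^2) \<partial>Om)"
    unfolding \<gamma>_def by (subst nn_integral_distr) auto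
  finally show ?thesis .
qed

lemma W2_eq:
  assumes "\<mu> \<in> P2" "\<nu> \<in> P2"
  shows "W2sq \<mu> \<nu> = (\<integral>\<^sup>+u. ennreal ((Q \<mu> u - Q \<nu> u)^2) \<partial>Om)"
proof (rule antisym)
  show "W2sq \<mu> \<nu> \<le> (\<integral>\<^sup>+u. ennreal ((Q \<mu> u - Q \<nu> u)^2) \<partial>Om)"
    using assms by (intro W2_upper Q_meas Q_distr)
  show "(\<integral>\<^sup>+u. ennreal ((Q \<mu> u - Q \<nu> u)^2) \<partial>Om) \<le> W2sq \<mu> \<nu>"
    unfolding W2sq_def by (rule INF_greatest) (rule W2_lower_nn[OF assms])
qed

definition sqi :: "(real \<Rightarrow> real) \<Rightarrow> bool" where
  "sqi f \<longleftrightarrow> f \<in> borel_measurable Om \<and> integrable Om (\<lambda>u. (f u)^2)"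

lemma sqi_Q: "\<mu> \<in> P2 \<Longrightarrow> sqi (Q \<mu>)"
proof -
  assume a: "\<mu> \<in> P2"
  have "integrable \<mu> (\<lambda>x. x^2)" using a by (simp add: P2_def)
  then have "integrable (distr Om borel (Q \<mu>)) (\<lambda>x. x^2)" using Q_distr[OF a] by simp
  then have "integrable Om (\<lambda>u. (Q \<mu> u)^2)"
    using Q_meas[OF a] by (subst (asm) integrable_distr_eq) auto
  then show ?thesis using Q_meas[OF a] by (simp add: sqi_def)
qed

lemma sqi_meas: "sqi f \<Longrightarrow> f \<in> borel_measurable Om" by (simp add: sqi_def)
lemma sqi_int: "sqi f \<Longrightarrow> integrable Om (\<lambda>u. (f u)^2)" by (simp add: sqi_def)

lemma sqi_AE_bound:
  assumes "sqi f" "g \<in> borel_measurable Om" "AE u in Om. \<bar>g u\<bar> \<le> \<bar>f u\<bar>"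
  shows "sqi g"
proof -
  have "integrable Om (\<lambda>u. (g u)^2)"
  proof (rule Bochner_Integration.integrable_bound[OF sqi_int[OF assms(1)]])
    show "(\<lambda>u. (g u)^2) \<in> borel_measurable Om" using assms(2) by measurable
    show "AE u in Om. norm ((g u)^2) \<le> norm ((f u)^2)"
      using assms(3) by eventually_elim (simp add: abs_le_square_iff)
  qed
  then show ?thesis using assms(2) by (simp add: sqi_def)
qed

lemma sqi_add:
  assumes "sqi f" "sqi g" shows "sqi (\<lambda>u. f u + g u)"
proof -
  have [measurable]: "f \<in> borel_measurable Om" "g \<in> borel_measurable Om" using assms by (auto simp: sqi_def)
  have "integrable Om (\<lambda>u. (f u + g u)^2)"
  proof (rule Bochner_Integration.integrable_bound)
    show "integrable Om (\<lambda>u. 2 * (f u)^2 + 2 * (g u)^2)"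
      using assms by (auto simp: sqi_def)
    show "(\<lambda>u. (f u + g u)^2) \<in> borel_measurable Om" by measurable
    show "AE u in Om. norm ((f u + g u)^2) \<le> norm (2 * (f u)^2 + 2 * (g u)^2)"
    proof (rule AE_I2)
      fix u
      have "(f u + g u)^2 \<le> 2 * (f u)^2 + 2 * (g u)^2"
        using sum_squares_ge_zero[of "f u - g u" 0] by (simp add: power2_eq_square algebra_simps)
      then show "norm ((f u + g u)^2) \<le> norm (2 * (f u)^2 + 2 * (g u)^2)" by simp
    qed
  qed
  then show ?thesis by (simp add: sqi_def)
qed

lemma sqi_cmult: assumes "sqi f" shows "sqi (\<lambda>u. c * f u)"
proof -
  have [measurable]: "f \<in> borel_measurable Om" using assms by (simp add: sqi_def)
  have m: "(\<lambda>u. c * f u) \<in> borel_measurable Om" by measurable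
  show ?thesis using assms m unfolding sqi_def by (simp add: power_mult_distrib)
qed

lemma sqi_neg: assumes "sqi f" shows "sqi (\<lambda>u. - f u)"
proof -
  have [measurable]: "f \<in> borel_measurable Om" using assms by (simp add: sqi_def)
  have m: "(\<lambda>u. - f u) \<in> borel_measurable Om" by measurable
  show ?thesis using assms m unfolding sqi_def by simp
qed

lemma sqi_diff: "sqi f \<Longrightarrow> sqi g \<Longrightarrow> sqi (\<lambda>u. f u - g u)"
  using sqi_add[of f "\<lambda>u. - g u"] sqi_neg[of g] by simp

lemma sqi_abs: assumes "sqi f" shows "sqi (\<lambda>u. \<bar>f u\<bar>)"
proof -
  have [measurable]: "f \<in> borel_measurable Om" using assms by (simp add: sqi_def)
  have m: "(\<lambda>u. \<bar>f u\<bar>) \<in> borel_measurable Om" by measurable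
  show ?thesis using assms m unfolding sqi_def by simp
qed

lemma sqi_zero: "sqi (\<lambda>u. 0)"
  by (simp add: sqi_def)

lemma sqi_sum: "finite A \<Longrightarrow> (\<And>i. i \<in> A \<Longrightarrow> sqi (f i)) \<Longrightarrow> sqi (\<lambda>u. \<Sum>i\<in>A. f i u)"
proof (induction A rule: finite_induct)
  case empty then show ?case by (simp add: sqi_zero)
next
  case (insert x F) then show ?case by (simp add: sqi_add)
qed

lemma sqi_prod:
  assumes "sqi f" "sqi g" shows "integrable Om (\<lambda>u. f u * g u)"
proof -
  have [measurable]: "f \<in> borel_measurable Om" "g \<in> borel_measurable Om" using assms by (auto simp: sqi_def)
  show ?thesis
  proof (rule Bochner_Integration.integrable_bound)
    show "integrable Om (\<lambda>u. (f u)^2 + (g u)^2)"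
      using assms by (auto simp: sqi_def)
    show "(\<lambda>u. f u * g u) \<in> borel_measurable Om"
      using assms by (intro borel_measurable_times) (auto simp: sqi_def)
    show "AE u in Om. norm (f u * g u) \<le> norm ((f u)^2 + (g u)^2)"
    proof (rule AE_I2)
      fix u
      have "\<bar>f u * g u\<bar> \<le> (f u)^2 + (g u)^2"
      proof -
        have "0 \<le> (\<bar>f u\<bar> - \<bar>g u\<bar>)^2" by simp
        then have "2 * (\<bar>f u\<bar> * \<bar>g u\<bar>) \<le> (f u)^2 + (g u)^2"
          by (simp add: power2_diff power2_abs)
        moreover have "0 \<le> \<bar>f u\<bar> * \<bar>g u\<bar>" by simp
        ultimately have "\<bar>f u\<bar> * \<bar>g u\<bar> \<le> (f u)^2 + (g u)^2" by linarith
        then show ?thesis by (simp add: abs_mult)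
      qed
      then show "norm (f u * g u) \<le> norm ((f u)^2 + (g u)^2)" by simp
    qed
  qed
qed

lemma wass2_sq_Q:
  assumes "\<mu> \<in> P2" "\<nu> \<in> P2"
  shows "(wass2 \<mu> \<nu>)^2 = (\<integral>u. (Q \<mu> u - Q \<nu> u)^2 \<partial>Om)"
proof -
  have s: "sqi (\<lambda>u. Q \<mu> u - Q \<nu> u)" using assms by (intro sqi_diff sqi_Q)
  have "W2sq \<mu> \<nu> = ennreal (\<integral>u. (Q \<mu> u - Q \<nu> u)^2 \<partial>Om)"
    unfolding W2_eq[OF assms] using sqi_int[OF s]
    by (intro nn_integral_eq_integral) simp_all
  moreover have "0 \<le> (\<integral>u. (Q \<mu> u - Q \<nu> u)^2 \<partial>Om)" by simp
  ultimately show ?thesis by (simp add: wass2_def)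
qed

lemma wass2_upper_sq:
  assumes "f \<in> borel_measurable Om" "g \<in> borel_measurable Om"
    and "distr Om borel f = \<mu>" "distr Om borel g = \<nu>"
    and "integrable Om (\<lambda>u. (f u - g u)^2)"
  shows "(wass2 \<mu> \<nu>)^2 \<le> (\<integral>u. (f u - g u)^2 \<partial>Om)"
proof -
  have "W2sq \<mu> \<nu> \<le> ennreal (\<integral>u. (f u - g u)^2 \<partial>Om)"
  proof -
    have e: "(\<integral>\<^sup>+u. ennreal ((f u - g u)^2) \<partial>Om) = ennreal (\<integral>u. (f u - g u)^2 \<partial>Om)"
      by (rule nn_integral_eq_integral[OF assms(5)]) simp
    show ?thesis using W2_upper[OF assms(1-4)] unfolding e .
  qed
  moreover have nn: "0 \<le> (\<integral>u. (f u - g u)^2 \<partial>Om)"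
    by (rule integral_nonneg_AE) simp
  ultimately have "enn2real (W2sq \<mu> \<nu>) \<le> enn2real (ennreal (\<integral>u. (f u - g u)^2 \<partial>Om))"
    by (intro enn2real_mono) simp_all
  then have "enn2real (W2sq \<mu> \<nu>) \<le> (\<integral>u. (f u - g u)^2 \<partial>Om)"
    using nn by simp
  then show ?thesis by (simp add: wass2_def)
qed

lemma wass2_upper:
  assumes "f \<in> borel_measurable Om" "g \<in> borel_measurable Om"
    and "distr Om borel f = \<mu>" "distr Om borel g = \<nu>"
    and "integrable Om (\<lambda>u. (f u - g u)^2)"
  shows "wass2 \<mu> \<nu> \<le> sqrt (\<integral>u. (f u - g u)^2 \<partial>Om)"
  using wass2_upper_sq[OF assms] by (simp add: wass2_def real_le_rsqrt)

locale cgraph =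
  fixes V :: "nat set" and E :: "(nat \<times> nat) set" and w :: "nat \<Rightarrow> nat \<Rightarrow> real" and \<delta> :: real
  assumes finV: "finite V" and EV: "E \<subseteq> V \<times> V" and reflE: "\<And>i. i \<in> V \<Longrightarrow> (i, i) \<in> E"
    and conn: "\<And>i j. i \<in> V \<Longrightarrow> j \<in> V \<Longrightarrow> (i, j) \<in> E\<^sup>*"
    and wd: "\<And>i j. (i, j) \<in> E \<Longrightarrow> \<delta> \<le> w i j" and dpos: "0 < \<delta>"
    and wsum: "\<And>i. i \<in> V \<Longrightarrow> (\<Sum>j\<in>{j. (i, j) \<in> E}. w i j) = 1"
begin

definition rec :: "(nat \<Rightarrow> nat \<Rightarrow> real) \<Rightarrow> bool" where
  "rec x \<longleftrightarrow> (\<forall>i\<in>V. \<forall>t. x i (Suc t) = (\<Sum>j\<in>{j. (i, j) \<in> E}. w i j * x j t))"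

lemma finN: "finite {j. (i, j) \<in> E}"
  using EV finV by (auto intro: finite_subset[of _ V])

lemma NV: "j \<in> {j. (i, j) \<in> E} \<Longrightarrow> j \<in> V"
  using EV by auto

lemma wnn: "(i, j) \<in> E \<Longrightarrow> 0 \<le> w i j"
  using wd dpos by (meson less_le_trans less_imp_le)

lemma rec_neg: "rec x \<Longrightarrow> rec (\<lambda>i t. - x i t)"
  unfolding rec_def by (simp add: sum_negf)

lemma ub_step:
  assumes "rec x" "i \<in> V" "\<forall>l\<in>V. x l t \<le> U"
  shows "x i (Suc t) \<le> U"
proof -
  have "x i (Suc t) = (\<Sum>j\<in>{j. (i, j) \<in> E}. w i j * x j t)" using assms unfolding rec_def by auto
  also have "\<dots> \<le> (\<Sum>j\<in>{j. (i, j) \<in> E}. w i j * U)"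
    using assms(3) NV wnn by (intro sum_mono mult_left_mono) auto
  also have "\<dots> = U" using wsum[OF assms(2)] by (simp add: sum_distrib_right[symmetric])
  finally show ?thesis .
qed

lemma ub_pres:
  assumes "rec x" "\<forall>l\<in>V. x l t \<le> U"
  shows "\<forall>l\<in>V. x l (t + s) \<le> U"
proof (induction s)
  case 0 then show ?case using assms by simp
next
  case (Suc s) then show ?case using ub_step[OF assms(1)] by simp
qed

lemma path:
  assumes "rec x" "\<forall>l\<in>V. x l t \<le> U" "k \<in> V"
  shows "(i, k) \<in> E ^^ s \<Longrightarrow> x i (t + s) \<le> (1 - \<delta>^s) * U + \<delta>^s * x k t"
proof (induction s arbitrary: i)
  case 0 then show ?case by simp
next
  case (Suc s)
  from relpow_Suc_D2[OF Suc.prems] obtain j where ij: "(i, j) \<in> E" and jk: "(j, k) \<in> E ^^ s" by blast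
  have iV: "i \<in> V" and jV: "j \<in> V" using ij EV by auto
  let ?N = "{j. (i, j) \<in> E}"
  have jN: "j \<in> ?N" using ij by simp
  have bnd: "\<forall>l\<in>V. x l (t + s) \<le> U" using ub_pres[OF assms(1,2)] by blast
  have IH: "x j (t + s) \<le> (1 - \<delta>^s) * U + \<delta>^s * x k t" using Suc.IH[OF jk] .
  have "x i (t + Suc s) = (\<Sum>l\<in>?N. w i l * x l (t + s))" using assms(1) iV unfolding rec_def by simp
  also have "\<dots> = w i j * x j (t + s) + (\<Sum>l\<in>?N - {j}. w i l * x l (t + s))"
    using finN jN by (simp add: sum.remove)
  also have "\<dots> \<le> w i j * ((1 - \<delta>^s) * U + \<delta>^s * x k t) + (\<Sum>l\<in>?N - {j}. w i l * U)"
    using IH wnn[OF ij] bnd NV wnn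
    by (intro add_mono mult_left_mono sum_mono) auto
  also have "(\<Sum>l\<in>?N - {j}. w i l * U) = (1 - w i j) * U"
  proof -
    have "(\<Sum>l\<in>?N - {j}. w i l) = 1 - w i j"
      using wsum[OF iV] finN jN by (simp add: sum.remove)
    then show ?thesis by (simp add: sum_distrib_right[symmetric])
  qed
  also have "w i j * ((1 - \<delta>^s) * U + \<delta>^s * x k t) + (1 - w i j) * U
      = U - w i j * \<delta>^s * (U - x k t)" by (simp add: algebra_simps)
  also have "\<dots> \<le> U - \<delta> * \<delta>^s * (U - x k t)"
  proof -
    have "0 \<le> U - x k t" using assms(2,3) by auto
    moreover have "\<delta> * \<delta>^s \<le> w i j * \<delta>^s" using wd[OF ij] dpos by (simp add: mult_right_mono)
    ultimately show ?thesis by (simp add: mult_right_mono)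
  qed
  also have "\<dots> = (1 - \<delta>^Suc s) * U + \<delta>^Suc s * x k t" by (simp add: algebra_simps)
  finally show ?case .
qed

lemma pad: "(i, k) \<in> E ^^ s \<Longrightarrow> k \<in> V \<Longrightarrow> (i, k) \<in> E ^^ (s + d)"
  by (induction d) (auto intro: relpow_Suc_I reflE)

lemma exN: "\<exists>N0>0. \<forall>i\<in>V. \<forall>k\<in>V. (i, k) \<in> E ^^ N0"
proof -
  have "\<forall>p\<in>V \<times> V. \<exists>s. p \<in> E ^^ s" using conn rtrancl_power by blast
  then obtain S where S: "\<forall>p\<in>V \<times> V. p \<in> E ^^ S p" by metis
  define N0 where "N0 = Suc (Max (S ` (V \<times> V)))"
  have "\<forall>i\<in>V. \<forall>k\<in>V. (i, k) \<in> E ^^ N0"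
  proof (intro ballI)
    fix i k assume iV: "i \<in> V" and kV: "k \<in> V"
    have "S (i, k) \<le> Max (S ` (V \<times> V))" using finV iV kV by (intro Max_ge) auto
    then obtain d where "N0 = S (i, k) + d" unfolding N0_def using le_Suc_ex le_SucI by blast
    then show "(i, k) \<in> E ^^ N0" using pad S iV kV by auto
  qed
  then show ?thesis unfolding N0_def by blast
qed


lemma d_le1: assumes "V \<noteq> {}" shows "\<delta> \<le> 1"
proof -
  obtain i where iV: "i \<in> V" using assms by auto
  have "\<delta> \<le> w i i" using wd reflE iV by auto
  also have "w i i \<le> (\<Sum>j\<in>{j. (i, j) \<in> E}. w i j)"
    using finN reflE[OF iV] wnn by (intro member_le_sum) auto
  finally show ?thesis using wsum iV by simp
qed

lemma consensus:
  assumes Vne: "V \<noteq> {}"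
  shows "\<exists>K>0. \<exists>\<rho>. 0 < \<rho> \<and> \<rho> < 1 \<and> (\<forall>x i0. rec x \<longrightarrow> i0 \<in> V \<longrightarrow>
           (\<forall>i\<in>V. \<forall>t. \<bar>x i t - lim (\<lambda>t. x i0 t)\<bar> \<le> K * \<rho>^t * (\<Sum>j\<in>V. \<bar>x j 0\<bar>)))"
proof -
  obtain N0 where N0: "N0 > 0" "\<forall>i\<in>V. \<forall>k\<in>V. (i, k) \<in> E ^^ N0" using exN by blast
  define \<epsilon> where "\<epsilon> = \<delta> ^ N0"
  have epos: "0 < \<epsilon>" unfolding \<epsilon>_def using dpos by simp
  define c where "c = 1 - min \<epsilon> (1/2)"
  have c: "1/2 \<le> c" "c < 1" unfolding c_def using epos by auto
  define \<rho> where "\<rho> = c powr (1 / real N0)"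
  have rho: "0 < \<rho>" "\<rho> < 1"
  proof -
    show "0 < \<rho>" unfolding \<rho>_def using c by simp
    have "c powr (1 / real N0) < 1 powr (1 / real N0)"
      using c N0(1) by (intro powr_less_mono2) auto
    then show "\<rho> < 1" unfolding \<rho>_def by simp
  qed
  define K where "K = 2 / c"
  have Kpos: "K > 0" unfolding K_def using c by simp
  have cpow: "c ^ (t div N0) \<le> \<rho> ^ t / c" for t
  proof -
    have c0: "0 < c" using c by simp
    have h1: "real (t div N0) * real N0 + real (t mod N0) = real t"
      by (metis of_nat_add of_nat_mult div_mult_mod_eq)
    have h2: "real (t mod N0) < real N0" using N0(1) by simp
    have h3: "real t \<le> (real (t div N0) + 1) * real N0"
      using h1 h2 by (simp add: distrib_right)
    have "real t / real N0 - 1 \<le> real (t div N0)"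
      using h3 N0(1) by (simp add: field_simps)
    then have "c powr real (t div N0) \<le> c powr (real t / real N0 - 1)"
      using c by (intro powr_mono') auto
    also have "\<dots> = c powr (real t / real N0) / c"
      using c0 by (simp add: powr_diff)
    also have "c powr (real t / real N0) = \<rho> ^ t"
      unfolding \<rho>_def using c0 by (simp add: powr_powr powr_realpow[symmetric])
    finally show ?thesis using c0 by (simp add: powr_realpow)
  qed
  have main: "\<bar>x i t - lim (\<lambda>t. x i0 t)\<bar> \<le> K * \<rho>^t * (\<Sum>j\<in>V. \<bar>x j 0\<bar>)"
    if rx: "rec x" and i0V: "i0 \<in> V" and iV: "i \<in> V" for x i0 i t
  proof -
    define M where "M t = Max ((\<lambda>i. x i t) ` V)" for t
    define m where "m t = Min ((\<lambda>i. x i t) ` V)" for t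
    define D where "D t = M t - m t" for t
    have Mge: "x j t \<le> M t" if "j \<in> V" for j t unfolding M_def using finV that by auto
    have mle: "m t \<le> x j t" if "j \<in> V" for j t unfolding m_def using finV that by auto
    have exm: "\<forall>t. \<exists>k. k \<in> V \<and> x k t = m t"
    proof
      fix t
      have "m t \<in> (\<lambda>i. x i t) ` V" unfolding m_def using finV Vne by (intro Min_in) auto
      then show "\<exists>k. k \<in> V \<and> x k t = m t" by auto
    qed
    from choice[OF exm] obtain km where km0: "\<forall>t. km t \<in> V \<and> x (km t) t = m t" by blast
    have km: "\<And>t. km t \<in> V" "\<And>t. x (km t) t = m t" using km0 by auto
    have exM: "\<forall>t. \<exists>k. k \<in> V \<and> x k t = M t"
    proof
      fix t
      have "M t \<in> (\<lambda>i. x i t) ` V" unfolding M_def using finV Vne by (intro Max_in) auto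
      then show "\<exists>k. k \<in> V \<and> x k t = M t" by auto
    qed
    from choice[OF exM] obtain kM where kM0: "\<forall>t. kM t \<in> V \<and> x (kM t) t = M t" by blast
    have kM: "\<And>t. kM t \<in> V" "\<And>t. x (kM t) t = M t" using kM0 by auto
    have Dnn: "0 \<le> D t" for t unfolding D_def using Mge[OF i0V, of t] mle[OF i0V, of t] by linarith
    have Mdec: "M (Suc t) \<le> M t" for t
    proof -
      have "\<forall>l\<in>V. x l t \<le> M t" using Mge by auto
      then have "x (kM (Suc t)) (Suc t) \<le> M t" using ub_step[OF rx kM(1)] by blast
      then show ?thesis using kM by simp
    qed
    have minc: "m t \<le> m (Suc t)" for t
    proof -
      have "\<forall>l\<in>V. - x l t \<le> - m t" using mle by auto
      then have "- x (km (Suc t)) (Suc t) \<le> - m t"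
        using ub_step[OF rec_neg[OF rx] km(1)] by blast
      then show ?thesis using km by simp
    qed
    have Mdecs: "decseq M" by (intro decseq_SucI Mdec)
    have mincs: "incseq m" by (intro incseq_SucI minc)
    have Ddec: "decseq D" unfolding D_def using Mdecs mincs
      by (auto simp: decseq_def incseq_def intro: diff_mono)
    have step: "D (t + N0) \<le> c * D t" for t
    proof -
      have up: "x j (t + N0) \<le> (1 - \<epsilon>) * M t + \<epsilon> * m t" if "j \<in> V" for j
        using path[where t=t and U="M t" and k="km t" and i=j and s=N0, OF rx _ km(1)] Mge N0(2) that km(2)[of t] km(1)[of t]
        unfolding \<epsilon>_def by auto
      have lo: "- x j (t + N0) \<le> (1 - \<epsilon>) * (- m t) + \<epsilon> * (- M t)" if "j \<in> V" for j
        using path[where t=t and U="- m t" and k="kM t" and i=j and s=N0, OF rec_neg[OF rx] _ kM(1)] mle N0(2) that kM(2)[of t] kM(1)[of t]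
        unfolding \<epsilon>_def by auto
      have "Max ((\<lambda>i. x i (t + N0)) ` V) \<le> (1 - \<epsilon>) * M t + \<epsilon> * m t"
        using finV Vne up by (intro Max.boundedI) auto
      then have A: "M (t + N0) \<le> (1 - \<epsilon>) * M t + \<epsilon> * m t" by (simp only: M_def)
      have "(1 - \<epsilon>) * m t + \<epsilon> * M t \<le> Min ((\<lambda>i. x i (t + N0)) ` V)"
        using finV Vne lo by (intro Min.boundedI) (auto simp: algebra_simps)
      then have B: "(1 - \<epsilon>) * m t + \<epsilon> * M t \<le> m (t + N0)" by (simp only: m_def)
      from A B have "D (t + N0) \<le> (1 - 2 * \<epsilon>) * D t"
        unfolding D_def by (simp add: algebra_simps)
      also have "\<dots> \<le> c * D t"
        using Dnn[of t] epos unfolding c_def by (intro mult_right_mono) auto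
      finally show ?thesis .
    qed
    have Dq: "D (q * N0) \<le> c ^ q * D 0" for q
    proof (induction q)
      case 0 then show ?case by simp
    next
      case (Suc q)
      have "D (Suc q * N0) = D (q * N0 + N0)" by (simp add: add.commute)
      also have "\<dots> \<le> c * D (q * N0)" by (rule step)
      also have "\<dots> \<le> c * (c ^ q * D 0)" using Suc c by (intro mult_left_mono) auto
      finally show ?case by simp
    qed
    have B: "D 0 \<le> 2 * (\<Sum>j\<in>V. \<bar>x j 0\<bar>)"
    proof -
      have s1: "\<bar>x (kM 0) 0\<bar> \<le> (\<Sum>j\<in>V. \<bar>x j 0\<bar>)"
        using finV kM(1) by (intro member_le_sum) auto
      have s2: "\<bar>x (km 0) 0\<bar> \<le> (\<Sum>j\<in>V. \<bar>x j 0\<bar>)"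
        using finV km(1) by (intro member_le_sum) auto
      have "M 0 \<le> (\<Sum>j\<in>V. \<bar>x j 0\<bar>)"
        using s1 kM(2)[of 0] by linarith
      moreover have "- m 0 \<le> (\<Sum>j\<in>V. \<bar>x j 0\<bar>)"
        using s2 km(2)[of 0] by linarith
      ultimately show ?thesis unfolding D_def by simp
    qed
    have Dbound: "D t \<le> K * \<rho>^t * (\<Sum>j\<in>V. \<bar>x j 0\<bar>)" for t
    proof -
      have "D t \<le> D ((t div N0) * N0)"
        using Ddec by (rule decseqD) (simp add: div_times_less_eq_dividend)
      also have "\<dots> \<le> c ^ (t div N0) * D 0" by (rule Dq)
      also have "\<dots> \<le> (\<rho> ^ t / c) * (2 * (\<Sum>j\<in>V. \<bar>x j 0\<bar>))"
        using cpow[of t] B Dnn[of 0] c rho by (intro mult_mono) auto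
      also have "\<dots> = K * \<rho>^t * (\<Sum>j\<in>V. \<bar>x j 0\<bar>)" unfolding K_def by simp
      finally show ?thesis .
    qed
    obtain L where L: "M \<longlonglongrightarrow> L" "\<forall>t. L \<le> M t"
      using decseq_convergent[OF Mdecs, of "m 0"] mincs Mge mle i0V
      by (metis incseq_def order_trans zero_le)
    have Lm: "m t \<le> L" for t
    proof (rule LIMSEQ_le_const[OF L(1)])
      show "\<exists>N. \<forall>n\<ge>N. m t \<le> M n"
        using mincs Mge mle i0V by (metis incseq_def order_trans)
    qed
    have D0: "D \<longlonglongrightarrow> 0"
    proof (rule tendsto_sandwich[of "\<lambda>t. 0" _ _ "\<lambda>t. K * \<rho>^t * (\<Sum>j\<in>V. \<bar>x j 0\<bar>)"])
      show "\<forall>\<^sub>F n in sequentially. 0 \<le> D n" using Dnn by simp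
      show "\<forall>\<^sub>F n in sequentially. D n \<le> K * \<rho>^n * (\<Sum>j\<in>V. \<bar>x j 0\<bar>)" using Dbound by simp
      have "(\<lambda>t. K * \<rho>^t * (\<Sum>j\<in>V. \<bar>x j 0\<bar>)) \<longlonglongrightarrow> K * 0 * (\<Sum>j\<in>V. \<bar>x j 0\<bar>)"
        using rho by (intro tendsto_intros) auto
      then show "(\<lambda>t. K * \<rho>^t * (\<Sum>j\<in>V. \<bar>x j 0\<bar>)) \<longlonglongrightarrow> 0" by simp
    qed auto
    have mL: "m \<longlonglongrightarrow> L"
    proof -
      have "(\<lambda>t. M t - D t) \<longlonglongrightarrow> L - 0" using L(1) D0 by (intro tendsto_intros)
      then show ?thesis unfolding D_def by simp
    qed
    have xL: "(\<lambda>t. x i0 t) \<longlonglongrightarrow> L"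
      by (rule tendsto_sandwich[OF _ _ mL L(1)]) (use mle Mge i0V in auto)
    then have "lim (\<lambda>t. x i0 t) = L" by (rule limI)
    moreover have "\<bar>x i t - L\<bar> \<le> D t"
      using mle[OF iV, of t] Mge[OF iV, of t] Lm[of t] L(2)[rule_format, of t] unfolding D_def by linarith
    ultimately show ?thesis using Dbound[of t] by simp
  qed
  show ?thesis using Kpos rho main by blast
qed

end

lemma var_id:
  fixes w b :: "nat \<Rightarrow> real"
  assumes "finite A" "(\<Sum>j\<in>A. w j) = 1"
  shows "(\<Sum>j\<in>A. w j * (a - b j)^2) = (a - (\<Sum>j\<in>A. w j * b j))^2 + (\<Sum>j\<in>A. w j * ((\<Sum>k\<in>A. w k * b k) - b j)^2)"
proof -
  define c where "c = (\<Sum>k\<in>A. w k * b k)"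
  have e: "w j * (a - b j)^2 = w j * (a - c)^2 + 2 * (a - c) * (w j * (c - b j)) + w j * (c - b j)^2" for j
    by (simp add: power2_eq_square algebra_simps)
  have z: "(\<Sum>j\<in>A. w j * (c - b j)) = 0"
    using assms(2) by (simp add: right_diff_distrib sum_subtractf sum_distrib_right[symmetric] c_def)
  have "(\<Sum>j\<in>A. w j * (a - b j)^2) = (\<Sum>j\<in>A. w j * (a - c)^2) + 2 * (a - c) * (\<Sum>j\<in>A. w j * (c - b j)) + (\<Sum>j\<in>A. w j * (c - b j)^2)"
    by (simp add: e sum.distrib sum_distrib_left)
  also have "\<dots> = (a - c)^2 + (\<Sum>j\<in>A. w j * (c - b j)^2)"
    using z assms(2) by (simp add: sum_distrib_right[symmetric])
  finally show ?thesis unfolding c_def .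
qed

lemma P2_distr: "sqi f \<Longrightarrow> distr Om borel f \<in> P2"
proof -
  assume s: "sqi f"
  have m: "f \<in> borel_measurable Om" using s by (simp add: sqi_def)
  have "integrable (distr Om borel f) (\<lambda>x. x^2)"
    using m sqi_int[OF s] by (subst integrable_distr_eq) auto
  then show ?thesis unfolding P2_def using prob_Om_distr[OF m] by simp
qed

lemma step_AE:
  fixes w :: "nat \<Rightarrow> real" and \<mu>j :: "nat \<Rightarrow> real measure"
  assumes A: "finite A" "(\<Sum>j\<in>A. w j) = 1" "\<And>j. j \<in> A \<Longrightarrow> 0 \<le> w j"
    and \<nu>: "\<nu> \<in> P2" and \<mu>j: "\<And>j. j \<in> A \<Longrightarrow> \<mu>j j \<in> P2"
    and mini: "\<And>\<eta>. \<eta> \<in> P2 \<Longrightarrow> (\<Sum>j\<in>A. w j * (wass2 \<nu> (\<mu>j j))^2) \<le> (\<Sum>j\<in>A. w j * (wass2 \<eta> (\<mu>j j))^2)"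
  shows "AE u in Om. Q \<nu> u = (\<Sum>j\<in>A. w j * Q (\<mu>j j) u)"
proof -
  define qb where "qb u = (\<Sum>j\<in>A. w j * Q (\<mu>j j) u)" for u
  have sq: "sqi (Q (\<mu>j j))" if "j \<in> A" for j using \<mu>j[OF that] by (rule sqi_Q)
  have sqb: "sqi qb" unfolding qb_def using A(1) sq by (intro sqi_sum sqi_cmult) auto
  have sqn: "sqi (Q \<nu>)" using \<nu> by (rule sqi_Q)
  define \<eta> where "\<eta> = distr Om borel qb"
  have \<eta>P: "\<eta> \<in> P2" unfolding \<eta>_def using sqb by (rule P2_distr)
  have i1: "integrable Om (\<lambda>u. (Q \<nu> u - Q (\<mu>j j) u)^2)" if "j \<in> A" for j
    using sqi_int[OF sqi_diff[OF sqn sq[OF that]]] .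
  have i2: "integrable Om (\<lambda>u. (qb u - Q (\<mu>j j) u)^2)" if "j \<in> A" for j
    using sqi_int[OF sqi_diff[OF sqb sq[OF that]]] .
  have i3: "integrable Om (\<lambda>u. (Q \<nu> u - qb u)^2)"
    using sqi_int[OF sqi_diff[OF sqn sqb]] .
  have a: "(wass2 \<nu> (\<mu>j j))^2 = (\<integral>u. (Q \<nu> u - Q (\<mu>j j) u)^2 \<partial>Om)" if "j \<in> A" for j
    using wass2_sq_Q[OF \<nu> \<mu>j[OF that]] .
  have b: "(wass2 \<eta> (\<mu>j j))^2 \<le> (\<integral>u. (qb u - Q (\<mu>j j) u)^2 \<partial>Om)" if "j \<in> A" for j
    using wass2_upper_sq[OF sqi_meas[OF sqb] sqi_meas[OF sq[OF that]] \<eta>_def[symmetric] Q_distr[OF \<mu>j[OF that]] i2[OF that]] .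
  define S1 where "S1 = (\<Sum>j\<in>A. w j * (\<integral>u. (Q \<nu> u - Q (\<mu>j j) u)^2 \<partial>Om))"
  define S2 where "S2 = (\<Sum>j\<in>A. w j * (\<integral>u. (qb u - Q (\<mu>j j) u)^2 \<partial>Om))"
  have "S1 = (\<Sum>j\<in>A. w j * (wass2 \<nu> (\<mu>j j))^2)" unfolding S1_def using a by simp
  also have "\<dots> \<le> (\<Sum>j\<in>A. w j * (wass2 \<eta> (\<mu>j j))^2)" by (rule mini[OF \<eta>P])
  also have "\<dots> \<le> S2" unfolding S2_def using b A(3) by (intro sum_mono mult_left_mono) auto
  finally have S12: "S1 \<le> S2" .
  have I1: "(\<integral>u. (\<Sum>j\<in>A. w j * (Q \<nu> u - Q (\<mu>j j) u)^2) \<partial>Om) = (\<Sum>j\<in>A. (\<integral>u. w j * (Q \<nu> u - Q (\<mu>j j) u)^2 \<partial>Om))"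
    by (rule Bochner_Integration.integral_sum) (rule integrable_mult_right, erule i1)
  have "S1 = (\<Sum>j\<in>A. (\<integral>u. w j * (Q \<nu> u - Q (\<mu>j j) u)^2 \<partial>Om))"
    unfolding S1_def by (rule sum.cong[OF refl]) (rule integral_mult_right_zero[symmetric])
  also have "\<dots> = (\<integral>u. (\<Sum>j\<in>A. w j * (Q \<nu> u - Q (\<mu>j j) u)^2) \<partial>Om)"
    by (rule I1[symmetric])
  also have "\<dots> = (\<integral>u. (Q \<nu> u - qb u)^2 + (\<Sum>j\<in>A. w j * (qb u - Q (\<mu>j j) u)^2) \<partial>Om)"
    unfolding qb_def by (rule Bochner_Integration.integral_cong[OF refl], rule var_id[OF A(1,2)])
  also have "\<dots> = (\<integral>u. (Q \<nu> u - qb u)^2 \<partial>Om) + S2"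
  proof -
    have "integrable Om (\<lambda>u. \<Sum>j\<in>A. w j * (qb u - Q (\<mu>j j) u)^2)"
      by (rule Bochner_Integration.integrable_sum, rule integrable_mult_right, erule i2)
    then have "(\<integral>u. (Q \<nu> u - qb u)^2 + (\<Sum>j\<in>A. w j * (qb u - Q (\<mu>j j) u)^2) \<partial>Om)
        = (\<integral>u. (Q \<nu> u - qb u)^2 \<partial>Om) + (\<integral>u. (\<Sum>j\<in>A. w j * (qb u - Q (\<mu>j j) u)^2) \<partial>Om)"
      using i3 by (rule Bochner_Integration.integral_add[rotated])
    also have "(\<integral>u. (\<Sum>j\<in>A. w j * (qb u - Q (\<mu>j j) u)^2) \<partial>Om) = (\<Sum>j\<in>A. (\<integral>u. w j * (qb u - Q (\<mu>j j) u)^2 \<partial>Om))"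
      by (rule Bochner_Integration.integral_sum) (rule integrable_mult_right, erule i2)
    also have "\<dots> = S2" unfolding S2_def by (rule sum.cong[OF refl]) (rule integral_mult_right_zero)
    finally show ?thesis .
  qed
  finally have "(\<integral>u. (Q \<nu> u - qb u)^2 \<partial>Om) \<le> 0" using S12 by simp
  moreover have "0 \<le> (\<integral>u. (Q \<nu> u - qb u)^2 \<partial>Om)" by (rule integral_nonneg_AE) simp
  ultimately have "(\<integral>u. (Q \<nu> u - qb u)^2 \<partial>Om) = 0" by simp
  then have "AE u in Om. (Q \<nu> u - qb u)^2 = 0"
    using integral_nonneg_eq_0_iff_AE[OF i3] by simp
  then show ?thesis unfolding qb_def[symmetric] by eventually_elim simp
qed

theorem proposition3:
  fixes n :: nat
    and E :: "(nat \<times> nat) set"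
    and w :: "nat \<Rightarrow> nat \<Rightarrow> real"
    and \<mu> :: "nat \<Rightarrow> nat \<Rightarrow> real measure"  (* \<mu> i t *)
  assumes E_sub: "E \<subseteq> {1..n} \<times> {1..n}"
    and E_sym: "\<And>i j. (i, j) \<in> E \<Longrightarrow> (j, i) \<in> E"
    and E_refl: "\<And>i. i \<in> {1..n} \<Longrightarrow> (i, i) \<in> E"
    and connected: "\<And>i j. i \<in> {1..n} \<Longrightarrow> j \<in> {1..n} \<Longrightarrow> (i, j) \<in> E\<^sup>*"
    and w_pos: "\<And>i j. i \<in> {1..n} \<Longrightarrow> j \<in> {1..n} \<Longrightarrow> (w i j > 0 \<longleftrightarrow> (i, j) \<in> E)"
    and w_zero: "\<And>i j. i \<in> {1..n} \<Longrightarrow> j \<in> {1..n} \<Longrightarrow> (i, j) \<notin> E \<Longrightarrow> w i j = 0"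
    and w_sum: "\<And>i. i \<in> {1..n} \<Longrightarrow> (\<Sum>j\<in>{1..n}. w i j) = 1"
    and w_diag: "\<And>i. i \<in> {1..n} \<Longrightarrow> w i i > 0"
    and init: "\<And>i. i \<in> {1..n} \<Longrightarrow> \<mu> i 0 \<in> P2"
    and upd_in: "\<And>i t. i \<in> {1..n} \<Longrightarrow> \<mu> i (Suc t) \<in> P2"
    and upd_min: "\<And>i t \<eta>. i \<in> {1..n} \<Longrightarrow> \<eta> \<in> P2 \<Longrightarrow>
        (\<Sum>j\<in>{j. (i, j) \<in> E}. w i j * (wass2 (\<mu> i (Suc t)) (\<mu> j t))\<^sup>2)
          \<le> (\<Sum>j\<in>{j. (i, j) \<in> E}. w i j * (wass2 \<eta> (\<mu> j t))\<^sup>2)"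
  shows "\<exists>\<mu>s\<in>P2. \<exists>C>0. \<exists>\<rho>. 0 < \<rho> \<and> \<rho> < 1 \<and>
           (\<forall>i\<in>{1..n}. \<forall>t. wass2 (\<mu> i t) \<mu>s \<le> C * \<rho> ^ t)"
proof (cases "n = 0")
  case True
  have "distr Om borel (\<lambda>u. 0) \<in> P2" by (rule P2_distr[OF sqi_zero])
  then show ?thesis using True
    by (intro bexI[of _ "distr Om borel (\<lambda>u. 0)"] exI[of _ 1] conjI exI[of _ "1/2"]) auto
next
  case False
  define V where "V = {1..n}"
  have finV: "finite V" and Vne: "V \<noteq> {}" and oneV: "1 \<in> V" unfolding V_def using False by auto
  have EV: "E \<subseteq> V \<times> V" using E_sub unfolding V_def .
  have finE: "finite E" using finV EV by (meson finite_SigmaI finite_subset)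
  have Ene: "E \<noteq> {}" using E_refl[of 1] oneV unfolding V_def by auto
  define \<delta> where "\<delta> = Min ((\<lambda>(i, j). w i j) ` E)"
  have wd: "\<delta> \<le> w i j" if "(i, j) \<in> E" for i j
    unfolding \<delta>_def using finE that by (intro Min_le) force+
  have dpos: "0 < \<delta>"
  proof -
    have "\<delta> \<in> (\<lambda>(i, j). w i j) ` E" unfolding \<delta>_def using finE Ene by (intro Min_in) auto
    then obtain i j where ij: "(i, j) \<in> E" "\<delta> = w i j" by auto
    then have "i \<in> V" "j \<in> V" using EV by auto
    then show ?thesis using w_pos ij unfolding V_def by auto
  qed
  have wsumN: "(\<Sum>j\<in>{j. (i, j) \<in> E}. w i j) = 1" if iV: "i \<in> V" for i
  proof -
    have sub: "{j. (i, j) \<in> E} \<subseteq> V" using EV by auto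
    have "(\<Sum>j\<in>{j. (i, j) \<in> E}. w i j) = (\<Sum>j\<in>V. w i j)"
    proof (rule sum.mono_neutral_left[OF finV sub])
      show "\<forall>j\<in>V - {j. (i, j) \<in> E}. w i j = 0" using w_zero iV unfolding V_def by auto
    qed
    then show ?thesis using w_sum iV unfolding V_def by simp
  qed
  interpret cg: cgraph V E w \<delta>
  proof
    show "finite V" by (rule finV)
    show "E \<subseteq> V \<times> V" by (rule EV)
    show "\<And>i. i \<in> V \<Longrightarrow> (i, i) \<in> E" using E_refl unfolding V_def .
    show "\<And>i j. i \<in> V \<Longrightarrow> j \<in> V \<Longrightarrow> (i, j) \<in> E\<^sup>*" using connected unfolding V_def .
    show "\<And>i j. (i, j) \<in> E \<Longrightarrow> \<delta> \<le> w i j" by (rule wd)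
    show "0 < \<delta>" by (rule dpos)
    show "\<And>i. i \<in> V \<Longrightarrow> (\<Sum>j\<in>{j. (i, j) \<in> E}. w i j) = 1" by (rule wsumN)
  qed
  have PP: "\<mu> i t \<in> P2" if "i \<in> V" for i t
    using that init upd_in unfolding V_def by (cases t) auto
  define q where "q i t = Q (\<mu> i t)" for i t
  have sq: "sqi (q i t)" if "i \<in> V" for i t unfolding q_def using PP[OF that] by (rule sqi_Q)
  have qm[measurable]: "q i t \<in> borel_measurable Om" if "i \<in> V" for i t using sqi_meas[OF sq[OF that]] .
  have stepAE: "AE u in Om. q i (Suc t) u = (\<Sum>j\<in>{j. (i, j) \<in> E}. w i j * q j t u)"
    if iV: "i \<in> V" for i t
    unfolding q_def
  proof (rule step_AE[where \<mu>j = "\<lambda>j. \<mu> j t"])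
    show "finite {j. (i, j) \<in> E}" by (rule cg.finN)
    show "(\<Sum>j\<in>{j. (i, j) \<in> E}. w i j) = 1" by (rule wsumN[OF iV])
    show "\<And>j. j \<in> {j. (i, j) \<in> E} \<Longrightarrow> 0 \<le> w i j" using cg.wnn by auto
    show "\<mu> i (Suc t) \<in> P2" by (rule PP[OF iV])
    show "\<And>j. j \<in> {j. (i, j) \<in> E} \<Longrightarrow> \<mu> j t \<in> P2" using PP cg.NV by blast
    show "\<And>\<eta>. \<eta> \<in> P2 \<Longrightarrow> (\<Sum>j\<in>{j. (i, j) \<in> E}. w i j * (wass2 (\<mu> i (Suc t)) (\<mu> j t))\<^sup>2)
          \<le> (\<Sum>j\<in>{j. (i, j) \<in> E}. w i j * (wass2 \<eta> (\<mu> j t))\<^sup>2)"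
      using upd_min iV unfolding V_def by blast
  qed
  have AEall: "AE u in Om. \<forall>t. \<forall>i\<in>V. q i (Suc t) u = (\<Sum>j\<in>{j. (i, j) \<in> E}. w i j * q j t u)"
    unfolding AE_all_countable
  proof
    fix t
    show "AE u in Om. \<forall>i\<in>V. q i (Suc t) u = (\<Sum>j\<in>{j. (i, j) \<in> E}. w i j * q j t u)"
      by (rule AE_finite_allI[OF finV]) (rule stepAE)
  qed
  obtain K \<rho> where K: "K > 0" and rho: "0 < \<rho>" "\<rho> < 1"
    and cons: "\<And>x i0. cg.rec x \<Longrightarrow> i0 \<in> V \<Longrightarrow>
           (\<forall>i\<in>V. \<forall>t. \<bar>x i t - lim (\<lambda>t. x i0 t)\<bar> \<le> K * \<rho>^t * (\<Sum>j\<in>V. \<bar>x j 0\<bar>))"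
    using cg.consensus[OF Vne] by blast
  define L where "L u = lim (\<lambda>t. q 1 t u)" for u
  define B where "B u = (\<Sum>j\<in>V. \<bar>q j 0 u\<bar>)" for u
  have AEb: "AE u in Om. \<forall>i\<in>V. \<forall>t. \<bar>q i t u - L u\<bar> \<le> K * \<rho>^t * B u"
    using AEall
  proof eventually_elim
    case (elim u)
    have "cg.rec (\<lambda>i t. q i t u)" unfolding cg.rec_def using elim by auto
    from cons[OF this oneV] show ?case unfolding L_def B_def by simp
  qed
  have Lm: "L \<in> borel_measurable Om"
    unfolding L_def using qm[OF oneV] by (rule borel_measurable_lim_metric)
  have sB: "sqi B" unfolding B_def using finV sq by (intro sqi_sum sqi_abs) auto
  have sL: "sqi L"
  proof (rule sqi_AE_bound[OF _ Lm])
    show "sqi (\<lambda>u. \<bar>q 1 0 u\<bar> + K * B u)"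
      using sq[OF oneV] sB by (intro sqi_add sqi_abs sqi_cmult)
    show "AE u in Om. \<bar>L u\<bar> \<le> \<bar>\<bar>q 1 0 u\<bar> + K * B u\<bar>"
      using AEb
    proof eventually_elim
      case (elim u)
      then have "\<bar>q 1 0 u - L u\<bar> \<le> K * B u" using oneV by (metis mult.right_neutral power_0)
      moreover have "0 \<le> B u" unfolding B_def by (simp add: sum_nonneg)
      ultimately show ?case using K by (simp add: abs_le_iff) linarith
    qed
  qed
  define \<mu>s where "\<mu>s = distr Om borel L"
  have \<mu>sP: "\<mu>s \<in> P2" unfolding \<mu>s_def using sL by (rule P2_distr)
  define C0 where "C0 = K * sqrt (\<integral>u. (B u)^2 \<partial>Om)"
  have C0nn: "0 \<le> C0" unfolding C0_def using K by (simp add: integral_nonneg_AE)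
  have bound: "wass2 (\<mu> i t) \<mu>s \<le> C0 * \<rho>^t" if iV: "i \<in> V" for i t
  proof -
    have si: "integrable Om (\<lambda>u. (q i t u - L u)^2)" using sqi_int[OF sqi_diff[OF sq[OF iV] sL]] .
    have ib: "(\<integral>u. (q i t u - L u)^2 \<partial>Om) \<le> (\<integral>u. (K * \<rho>^t)^2 * (B u)^2 \<partial>Om)"
    proof (rule integral_mono_AE[OF si])
      show "integrable Om (\<lambda>u. (K * \<rho>^t)^2 * (B u)^2)" using sqi_int[OF sB] by simp
      show "AE u in Om. (q i t u - L u)^2 \<le> (K * \<rho>^t)^2 * (B u)^2"
        using AEb
      proof eventually_elim
        case (elim u)
        then have "\<bar>q i t u - L u\<bar> \<le> K * \<rho>^t * B u" using iV by blast
        then have "\<bar>q i t u - L u\<bar>^2 \<le> (K * \<rho>^t * B u)^2" by (intro power_mono) auto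
        then show ?case by (simp add: power_mult_distrib)
      qed
    qed
    have "wass2 (\<mu> i t) \<mu>s \<le> sqrt (\<integral>u. (q i t u - L u)^2 \<partial>Om)"
      unfolding \<mu>s_def
      by (rule wass2_upper[OF qm[OF iV] Lm _ refl si]) (simp add: q_def Q_distr PP[OF iV])
    also have "sqrt (\<integral>u. (q i t u - L u)^2 \<partial>Om) \<le> sqrt (\<integral>u. (K * \<rho>^t)^2 * (B u)^2 \<partial>Om)"
      using ib by (rule real_sqrt_le_mono)
    also have "\<dots> = C0 * \<rho>^t"
      unfolding C0_def using K rho by (simp add: real_sqrt_mult)
    finally show ?thesis .
  qed
  show ?thesis
  proof (rule bexI[OF _ \<mu>sP])
    have "\<forall>i\<in>{1..n}. \<forall>t. wass2 (\<mu> i t) \<mu>s \<le> (C0 + 1) * \<rho>^t"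
    proof (intro ballI allI)
      fix i t assume "i \<in> {1..n}"
      then have "wass2 (\<mu> i t) \<mu>s \<le> C0 * \<rho>^t" using bound unfolding V_def by blast
      also have "\<dots> \<le> (C0 + 1) * \<rho>^t" using rho by (intro mult_right_mono) auto
      finally show "wass2 (\<mu> i t) \<mu>s \<le> (C0 + 1) * \<rho>^t" .
    qed
    moreover have "0 < C0 + 1" using C0nn by simp
    ultimately show "\<exists>C>0. \<exists>\<rho>. 0 < \<rho> \<and> \<rho> < 1 \<and> (\<forall>i\<in>{1..n}. \<forall>t. wass2 (\<mu> i t) \<mu>s \<le> C * \<rho> ^ t)"
      using rho by blast
  qed
qed


end
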